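(* For every integer $k\ge0$ and every $x\in U_k$, $\{d_{U_k}(x,x'):x'\in U_k,\ x'\ne x\}=\{k-2j: j=0,1,\ldots,\lfloor\frac{k-1}{2}\rfloor\}$.
   Context: For metric spaces $X,Y$ and $a>0$, $X\overset{a}{\sqcup}Y$ is the disjoint union with the original metrics on each part and distance $a$ between points of different parts. The sequence $(U_k)_{k\ge0}$: $U_0$ is a one-point space, $U_1$ is a two-point space with distance $1$, and $U_k=U_{k-2}\overset{k}{\sqcup}U_{k-2}$ for $k>1$. (For $k=0$ the right-hand set is empty.) *)

theory Defs
  imports Main Complex_Main
begin

(* The spaces U_k, realised concretely.  A point of U_(k+2) = U_k \<sqcup>^(k+2) U_k is
   a tag b (which copy) followed by a point of U_k.  U_0 = {[]}, U_1 = {[False],[True]}. *)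
fun Upts :: "nat \<Rightarrow> bool list set" where
  "Upts 0 = {[]}"
| "Upts (Suc 0) = {[False], [True]}"
| "Upts (Suc (Suc k)) = {b # x | b x. x \<in> Upts k}"

fun Ud :: "nat \<Rightarrow> bool list \<Rightarrow> bool list \<Rightarrow> real" where
  "Ud 0 x y = 0"
| "Ud (Suc 0) x y = (if x = y then 0 else 1)"
| "Ud (Suc (Suc k)) x y =
     (if hd x = hd y then Ud k (tl x) (tl y) else real (Suc (Suc k)))"

end

theory Submission
  imports Defs
begin

lemma div_e: "(int (Suc (Suc k)) - 1) div 2 = (int k - 1) div 2 + 1"
proof -
  have a: "int (Suc (Suc k)) - 1 = (int k - 1) + 2" by simp
  show ?thesis unfolding a by simp
qed

lemma R_step:
  "{real (Suc (Suc k)) - 2 * real j | j :: nat. int j \<le> (int (Suc (Suc k)) - 1) div 2}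
   = insert (real (Suc (Suc k))) {real k - 2 * real j | j :: nat. int j \<le> (int k - 1) div 2}"
  (is "?A = ?B")
proof
  show "?A \<subseteq> ?B"
  proof
    fix r assume "r \<in> ?A"
    then obtain j where r: "r = real (Suc (Suc k)) - 2 * real j"
      and j: "int j \<le> (int (Suc (Suc k)) - 1) div 2" by blast
    show "r \<in> ?B"
    proof (cases j)
      case 0 then show ?thesis using r by simp
    next
      case (Suc i)
      have "int i \<le> (int k - 1) div 2" using j Suc unfolding div_e by simp
      moreover have "r = real k - 2 * real i" using r Suc by simp
      ultimately show ?thesis by blast
    qed
  qed
next
  show "?B \<subseteq> ?A"
  proof
    fix r assume "r \<in> ?B"
    then consider "r = real (Suc (Suc k))"
      | i where "r = real k - 2 * real i" "int i \<le> (int k - 1) div 2" by blast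
    then show "r \<in> ?A"
    proof cases
      case 1
      have "int 0 \<le> (int (Suc (Suc k)) - 1) div 2" by simp
      then show ?thesis using 1 by force
    next
      case 2
      have "int (Suc i) \<le> (int (Suc (Suc k)) - 1) div 2" using 2(2) unfolding div_e by simp
      moreover have "r = real (Suc (Suc k)) - 2 * real (Suc i)" using 2(1) by simp
      ultimately show ?thesis by blast
    qed
  qed
qed

lemma L_step:
  assumes "y \<in> Upts k"
  shows "{Ud (Suc (Suc k)) (b # y) x' | x'. x' \<in> Upts (Suc (Suc k)) \<and> x' \<noteq> b # y}
    = insert (real (Suc (Suc k))) {Ud k y x' | x'. x' \<in> Upts k \<and> x' \<noteq> y}"
  (is "?A = ?B")
proof
  show "?A \<subseteq> ?B"
  proof
    fix r assume "r \<in> ?A"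
    then obtain x' where r: "r = Ud (Suc (Suc k)) (b # y) x'"
      and x': "x' \<in> Upts (Suc (Suc k))" and ne: "x' \<noteq> b # y" by (simp only: mem_Collect_eq) blast
    from x' obtain c z where xz: "x' = c # z" and z: "z \<in> Upts k" by auto
    show "r \<in> ?B"
    proof (cases "c = b")
      case True
      then have "z \<noteq> y" using ne xz by simp
      moreover have "r = Ud k y z" using r xz True by simp
      ultimately have "\<exists>x'. r = Ud k y x' \<and> x' \<in> Upts k \<and> x' \<noteq> y" using z by blast
      then show ?thesis by (simp only: insert_iff mem_Collect_eq) blast
    next
      case False
      then have "r = real (Suc (Suc k))" using r xz by auto
      then show ?thesis by simp
    qed
  qed
next
  show "?B \<subseteq> ?A"
  proof
    fix r assume "r \<in> ?B"
    then consider "r = real (Suc (Suc k))"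
      | z where "r = Ud k y z" "z \<in> Upts k" "z \<noteq> y" by (simp only: insert_iff mem_Collect_eq) blast
    then show "r \<in> ?A"
    proof cases
      case 1
      have "Ud (Suc (Suc k)) (b # y) ((\<not> b) # y) = r" using 1 by simp
      moreover have "(\<not> b) # y \<in> Upts (Suc (Suc k))" using assms by simp
      ultimately have "\<exists>x'. r = Ud (Suc (Suc k)) (b # y) x' \<and> x' \<in> Upts (Suc (Suc k)) \<and> x' \<noteq> b # y" by (intro exI[of _ "(\<not> b) # y"]) simp
      then show ?thesis by (simp only: mem_Collect_eq)
    next
      case 2
      have "Ud (Suc (Suc k)) (b # y) (b # z) = r" using 2 by simp
      moreover have "b # z \<in> Upts (Suc (Suc k))" using 2 by simp
      ultimately have "\<exists>x'. r = Ud (Suc (Suc k)) (b # y) x' \<and> x' \<in> Upts (Suc (Suc k)) \<and> x' \<noteq> b # y" using 2 by (intro exI[of _ "b # z"]) simp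
      then show ?thesis by (simp only: mem_Collect_eq)
    qed
  qed
qed

theorem claim6:
  fixes k :: nat and x :: "bool list"
  assumes "x \<in> Upts k"
  shows "{Ud k x x' | x'. x' \<in> Upts k \<and> x' \<noteq> x}
         = {real k - 2 * real j | j :: nat. int j \<le> (int k - 1) div 2}"
  using assms
proof (induction k arbitrary: x rule: Upts.induct)
  case 1
  then show ?case by auto
next
  case 2
  have r: "{real (Suc 0) - 2 * real j | j :: nat. int j \<le> (int (Suc 0) - 1) div 2} = {1}" by auto
  show ?case unfolding r using 2 by auto
next
  case (3 k)
  then obtain b y where x: "x = b # y" and y: "y \<in> Upts k" by auto
  show ?case unfolding x L_step[OF y] R_step using 3(1)[OF y] by simp
qed

end
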